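(* Let $\Gamma$ and $\Delta$ be LJB-contexts, $A$ a formula and $V$ a set of variables such that $A$ has no free variable in $V$. Let $\Sigma_1\vdash E_1$ be a flattening of the LJB-sequent $\Gamma,[\Delta]_V\vdash A$ and $\Sigma_2\vdash E_2$ a flattening of $[\Gamma]_V,[\Delta]_V\vdash A$. Then $\Sigma_1\vdash E_1$ and $\Sigma_2\vdash E_2$ are $\overline{\alpha}$-equivalent.
   Context: Formulas of minimal predicate logic: $A ::= P(t_1,\dots,t_n)\mid A\rightarrow A\mid \forall x\,A$ with first-order terms $t ::= x\mid f(t_1,\dots,t_n)$. LJ$^{+}$-sequent: finite multiset of formulas $\vdash$ formula. LJB-contexts and items: an LJB-context is a finite multiset of items; an item is a formula or $[\Gamma]_V$ with $V$ a finite set of variables (bound by the bracket) and $\Gamma$ an LJB-context; $FV([\Gamma]_V)=FV(\Gamma)\setminus V$. An LJB-sequent $\Gamma\vdash A$ is an LJB-context and a formula. A fresh $\alpha$-variant of an LJB-sequent is an $\alpha$-equivalent LJB-sequent (renaming variables bound by quantifiers or brackets) in which bound variables are pairwise distinct and distinct from free variables; a flattening of an LJB-sequent is an LJ$^{+}$-sequent obtained by erasing all brackets in a fresh $\alpha$-variant of it. Two LJ$^{+}$-sequents $\Gamma\vdash A$ and $\Gamma'\vdash A'$ are $\overline{\alpha}$-equivalent if there exist substitutions $\sigma,\sigma'$ (renamings of variables, so that the two sequents differ only by names of bound and free variables) such that $\sigma(\Gamma\vdash A)$ is $\alpha$-equivalent to $\Gamma'\vdash A'$ and $\sigma'(\Gamma'\vdash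 A')$ is $\alpha$-equivalent to $\Gamma\vdash A$. *)

theory Defs
  imports Main "HOL-Library.Multiset" "HOL-Library.FSet"
begin

text \<open>Variables are natural numbers (an infinite supply); function symbols
  have type 'f, predicate symbols type 'p.\<close>

datatype 'f trm = Var nat | Fn 'f "'f trm list"

datatype ('f, 'p) fm = Pred 'p "'f trm list" | Imp "('f, 'p) fm" "('f, 'p) fm" | All nat "('f, 'p) fm"

text \<open>LJB items: a formula, or a bracket [Gamma]_V binding the finite set V.
  LJB contexts are finite multisets of items.\<close>

datatype ('f, 'p) item = Fm "('f, 'p) fm" | Br "nat fset" "('f, 'p) item multiset"

type_synonym ('f, 'p) ljb_ctx = "('f, 'p) item multiset"
type_synonym ('f, 'p) ljb_seq = "('f, 'p) item multiset \<times> ('f, 'p) fm"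
type_synonym ('f, 'p) lj_seq = "('f, 'p) fm multiset \<times> ('f, 'p) fm"

primrec fv_trm :: "'f trm \<Rightarrow> nat set" where
  "fv_trm (Var x) = {x}"
| "fv_trm (Fn f ts) = \<Union> (set (map fv_trm ts))"

primrec fv_fm :: "('f, 'p) fm \<Rightarrow> nat set" where
  "fv_fm (Pred P ts) = \<Union> (set (map fv_trm ts))"
| "fv_fm (Imp A B) = fv_fm A \<union> fv_fm B"
| "fv_fm (All x A) = fv_fm A - {x}"

primrec fv_item :: "('f, 'p) item \<Rightarrow> nat set" where
  "fv_item (Fm A) = fv_fm A"
| "fv_item (Br V G) = \<Union> (set_mset (image_mset fv_item G)) - fset V"

definition fv_ctx :: "('f, 'p) ljb_ctx \<Rightarrow> nat set" where
  "fv_ctx G = \<Union> (fv_item ` set_mset G)"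

text \<open>Bound-variable occurrences, counted with multiplicity (one per binding).\<close>

primrec bnd_fm :: "('f, 'p) fm \<Rightarrow> nat multiset" where
  "bnd_fm (Pred P ts) = {#}"
| "bnd_fm (Imp A B) = bnd_fm A + bnd_fm B"
| "bnd_fm (All x A) = {#x#} + bnd_fm A"

primrec bnd_item :: "('f, 'p) item \<Rightarrow> nat multiset" where
  "bnd_item (Fm A) = bnd_fm A"
| "bnd_item (Br V G) = mset_set (fset V) + sum_mset (image_mset bnd_item G)"

definition bnd_ctx :: "('f, 'p) ljb_ctx \<Rightarrow> nat multiset" where
  "bnd_ctx G = sum_mset (image_mset bnd_item G)"

text \<open>An environment is a stack of binder layers; each layer relates the variables
  bound by corresponding binders on the left and on the right (a bijection).
  aeq_fm A sigma [] B means: B is alpha-equivalent to the capture-avoiding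
  renaming sigma(A) of the free variables of A. With sigma = id this is plain
  alpha-equivalence.\<close>

type_synonym env = "(nat \<times> nat) set list"

fun veq :: "(nat \<Rightarrow> nat) \<Rightarrow> env \<Rightarrow> nat \<Rightarrow> nat \<Rightarrow> bool" where
  "veq \<sigma> [] x y = (\<sigma> x = y)"
| "veq \<sigma> (R # E) x y =
     (if x \<in> Domain R \<or> y \<in> Range R then (x, y) \<in> R else veq \<sigma> E x y)"

primrec aeq_trm :: "'f trm \<Rightarrow> (nat \<Rightarrow> nat) \<Rightarrow> env \<Rightarrow> 'f trm \<Rightarrow> bool" where
  "aeq_trm (Var x) \<sigma> E t = (case t of Var y \<Rightarrow> veq \<sigma> E x y | Fn _ _ \<Rightarrow> False)"
| "aeq_trm (Fn f ts) \<sigma> E t = (case t of Var _ \<Rightarrow> False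
     | Fn g us \<Rightarrow> f = g \<and> list_all2 (\<lambda>P u. P \<sigma> E u) (map aeq_trm ts) us)"

primrec aeq_fm :: "('f, 'p) fm \<Rightarrow> (nat \<Rightarrow> nat) \<Rightarrow> env \<Rightarrow> ('f, 'p) fm \<Rightarrow> bool" where
  "aeq_fm (Pred P ts) \<sigma> E B = (case B of Pred Q us \<Rightarrow>
       P = Q \<and> list_all2 (\<lambda>t u. aeq_trm t \<sigma> E u) ts us | _ \<Rightarrow> False)"
| "aeq_fm (Imp A1 A2) \<sigma> E B = (case B of Imp B1 B2 \<Rightarrow>
       aeq_fm A1 \<sigma> E B1 \<and> aeq_fm A2 \<sigma> E B2 | _ \<Rightarrow> False)"
| "aeq_fm (All x A) \<sigma> E B = (case B of All y B' \<Rightarrow>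
       aeq_fm A \<sigma> ({(x, y)} # E) B' | _ \<Rightarrow> False)"

primrec aeq_item :: "('f, 'p) item \<Rightarrow> (nat \<Rightarrow> nat) \<Rightarrow> env \<Rightarrow> ('f, 'p) item \<Rightarrow> bool" where
  "aeq_item (Fm A) \<sigma> E I = (case I of Fm B \<Rightarrow> aeq_fm A \<sigma> E B | Br _ _ \<Rightarrow> False)"
| "aeq_item (Br V G) \<sigma> E I = (case I of Fm _ \<Rightarrow> False
     | Br W H \<Rightarrow> (\<exists>f. bij_betw f (fset V) (fset W) \<and>
          rel_mset (\<lambda>P J. P \<sigma> ({(x, f x) | x. x \<in> fset V} # E) J)
                   (image_mset aeq_item G) H))"

definition aeq_ljb :: "(nat \<Rightarrow> nat) \<Rightarrow> ('f, 'p) ljb_seq \<Rightarrow> ('f, 'p) ljb_seq \<Rightarrow> bool" where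
  "aeq_ljb \<sigma> S S' \<longleftrightarrow>
     rel_mset (\<lambda>I J. aeq_item I \<sigma> [] J) (fst S) (fst S') \<and> aeq_fm (snd S) \<sigma> [] (snd S')"

definition aeq_lj :: "(nat \<Rightarrow> nat) \<Rightarrow> ('f, 'p) lj_seq \<Rightarrow> ('f, 'p) lj_seq \<Rightarrow> bool" where
  "aeq_lj \<sigma> S S' \<longleftrightarrow>
     rel_mset (\<lambda>A B. aeq_fm A \<sigma> [] B) (fst S) (fst S') \<and> aeq_fm (snd S) \<sigma> [] (snd S')"

definition fresh_ljb :: "('f, 'p) ljb_seq \<Rightarrow> bool" where
  "fresh_ljb S \<longleftrightarrow>
     (let B = bnd_ctx (fst S) + bnd_fm (snd S) in
        (\<forall>x. count B x \<le> 1) \<and> set_mset B \<inter> (fv_ctx (fst S) \<union> fv_fm (snd S)) = {})"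

definition fresh_variant :: "('f, 'p) ljb_seq \<Rightarrow> ('f, 'p) ljb_seq \<Rightarrow> bool" where
  "fresh_variant S' S \<longleftrightarrow> aeq_ljb id S S' \<and> fresh_ljb S'"

primrec erase :: "('f, 'p) item \<Rightarrow> ('f, 'p) fm multiset" where
  "erase (Fm A) = {#A#}"
| "erase (Br V G) = sum_mset (image_mset erase G)"

definition flatten_ctx :: "('f, 'p) ljb_ctx \<Rightarrow> ('f, 'p) fm multiset" where
  "flatten_ctx G = sum_mset (image_mset erase G)"

definition is_flattening :: "('f, 'p) lj_seq \<Rightarrow> ('f, 'p) ljb_seq \<Rightarrow> bool" where
  "is_flattening T S \<longleftrightarrow>
     (\<exists>S'. fresh_variant S' S \<and> T = (flatten_ctx (fst S'), snd S'))"

definition abar_equiv :: "('f, 'p) lj_seq \<Rightarrow> ('f, 'p) lj_seq \<Rightarrow> bool" where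
  "abar_equiv S S' \<longleftrightarrow> (\<exists>\<sigma> \<sigma>'. aeq_lj \<sigma> S S' \<and> aeq_lj \<sigma>' S' S)"

end

theory Submission
  imports Defs
begin

lemma rel_mset_add:
  "rel_mset R M1 M2 \<Longrightarrow> rel_mset R N1 N2 \<Longrightarrow> rel_mset R (M1 + N1) (M2 + N2)"
proof (induction M1 arbitrary: M2)
  case empty
  then show ?case by simp
next
  case (add a M)
  from msed_rel_invL[OF add.prems(1)] obtain N b where
    "M2 = add_mset b N" "R a b" "rel_mset R M N" by blast
  then show ?case using add.IH add.prems(2) by (simp add: rel_mset_Plus)
qed

lemma veq_push:
  assumes "veq s1 E1 x' y'" "veq s2 E2 x' z'" "x' \<noteq> x"
    and "veq s1 E1 x' y' \<Longrightarrow> veq s2 E2 x' z' \<Longrightarrow> veq t E3 y' z'"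
    and "veq s1 ({(x,y)} # E1) x' y'" "veq s2 ({(x,z)} # E2) x' z'"
  shows "veq t ({(y,z)} # E3) y' z'"
  using assms by (auto split: if_splits)

lemma trans_trm:
  "aeq_trm t s1 E1 u \<Longrightarrow> aeq_trm t s2 E2 v \<Longrightarrow>
   (\<forall>x\<in>fv_trm t. \<forall>y z. veq s1 E1 x y \<longrightarrow> veq s2 E2 x z \<longrightarrow> veq tau E3 y z) \<Longrightarrow>
   aeq_trm u tau E3 v"
proof (induction t arbitrary: u v)
  case (Var x)
  obtain y where y: "u = Var y" "veq s1 E1 x y" using Var.prems(1) by (cases u) auto
  obtain z where z: "v = Var z" "veq s2 E2 x z" using Var.prems(2) by (cases v) auto
  show ?case using y z Var.prems(3) by simp
next
  case (Fn f ts)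
  obtain us where u1: "u = Fn f us" and l1: "list_all2 (\<lambda>t u. aeq_trm t s1 E1 u) ts us"
    using Fn.prems(1) by (cases u) (auto simp: list_all2_map1)
  obtain vs where u2: "v = Fn f vs" and l2: "list_all2 (\<lambda>t u. aeq_trm t s2 E2 u) ts vs"
    using Fn.prems(2) by (cases v) (auto simp: list_all2_map1)
  note u = u1 u2
  have "list_all2 (\<lambda>u v. aeq_trm u tau E3 v) us vs"
    unfolding list_all2_conv_all_nth
  proof (intro conjI allI impI)
    show "length us = length vs" using l1 l2 by (simp add: list_all2_conv_all_nth)
    fix i assume i: "i < length us"
    then have i': "i < length ts" using l1 by (simp add: list_all2_conv_all_nth)
    show "aeq_trm (us ! i) tau E3 (vs ! i)"
    proof (rule Fn.IH)
      show "ts ! i \<in> set ts" using i' by simp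
      show "aeq_trm (ts ! i) s1 E1 (us ! i)" using l1 i' by (simp add: list_all2_conv_all_nth)
      show "aeq_trm (ts ! i) s2 E2 (vs ! i)" using l2 i' by (simp add: list_all2_conv_all_nth)
      show "\<forall>x\<in>fv_trm (ts ! i). \<forall>y z. veq s1 E1 x y \<longrightarrow> veq s2 E2 x z \<longrightarrow> veq tau E3 y z"
      proof -
        have "fv_trm (ts ! i) \<subseteq> fv_trm (Fn f ts)" using i' nth_mem by fastforce
        then show ?thesis using Fn.prems(3) by blast
      qed
    qed
  qed
  then show ?case using u by (simp add: list_all2_map1)
qed

lemma trans_fm:
  "aeq_fm A s1 E1 B \<Longrightarrow> aeq_fm A s2 E2 C \<Longrightarrow>
   (\<forall>x\<in>fv_fm A. \<forall>y z. veq s1 E1 x y \<longrightarrow> veq s2 E2 x z \<longrightarrow> veq tau E3 y z) \<Longrightarrow>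
   aeq_fm B tau E3 C"
proof (induction A arbitrary: B C E1 E2 E3)
  case (Pred P ts)
  obtain us where u1: "B = Pred P us" and l1: "list_all2 (\<lambda>t u. aeq_trm t s1 E1 u) ts us"
    using Pred.prems(1) by (cases B) auto
  obtain vs where u2: "C = Pred P vs" and l2: "list_all2 (\<lambda>t u. aeq_trm t s2 E2 u) ts vs"
    using Pred.prems(2) by (cases C) auto
  note u = u1 u2
  have "list_all2 (\<lambda>u v. aeq_trm u tau E3 v) us vs"
    unfolding list_all2_conv_all_nth
  proof (intro conjI allI impI)
    show "length us = length vs" using l1 l2 by (simp add: list_all2_conv_all_nth)
    fix i assume i: "i < length us"
    then have i': "i < length ts" using l1 by (simp add: list_all2_conv_all_nth)
    show "aeq_trm (us ! i) tau E3 (vs ! i)"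
    proof (rule trans_trm)
      show "aeq_trm (ts ! i) s1 E1 (us ! i)" using l1 i' by (simp add: list_all2_conv_all_nth)
      show "aeq_trm (ts ! i) s2 E2 (vs ! i)" using l2 i' by (simp add: list_all2_conv_all_nth)
      show "\<forall>x\<in>fv_trm (ts ! i). \<forall>y z. veq s1 E1 x y \<longrightarrow> veq s2 E2 x z \<longrightarrow> veq tau E3 y z"
      proof -
        have "fv_trm (ts ! i) \<subseteq> fv_fm (Pred P ts)" using i' nth_mem by fastforce
        then show ?thesis using Pred.prems(3) by blast
      qed
    qed
  qed
  then show ?case using u by simp
next
  case (Imp A1 A2)
  obtain B1 B2 where b1: "B = Imp B1 B2" and h1: "aeq_fm A1 s1 E1 B1" "aeq_fm A2 s1 E1 B2"
    using Imp.prems(1) by (cases B) auto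
  obtain C1 C2 where b2: "C = Imp C1 C2" and h2: "aeq_fm A1 s2 E2 C1" "aeq_fm A2 s2 E2 C2"
    using Imp.prems(2) by (cases C) auto
  note b = b1 b2 and h = h1(1) h1(2) h2(1) h2(2)
  have "aeq_fm B1 tau E3 C1" by (rule Imp.IH(1)[OF h(1) h(3)]) (use Imp.prems(3) in \<open>simp only: fv_fm.simps, blast\<close>)
  moreover have "aeq_fm B2 tau E3 C2" by (rule Imp.IH(2)[OF h(2) h(4)]) (use Imp.prems(3) in \<open>simp only: fv_fm.simps, blast\<close>)
  ultimately show ?case using b by simp
next
  case (All x A)
  obtain y B' where b1: "B = All y B'" and h1: "aeq_fm A s1 ({(x,y)} # E1) B'"
    using All.prems(1) by (cases B) auto
  obtain z C' where b2: "C = All z C'" and h2: "aeq_fm A s2 ({(x,z)} # E2) C'"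
    using All.prems(2) by (cases C) auto
  note b = b1 b2
  have "aeq_fm B' tau ({(y,z)} # E3) C'"
  proof (rule All.IH[OF h1 h2], intro ballI allI impI)
    fix x' y' z' assume x': "x' \<in> fv_fm A" and v1: "veq s1 ({(x,y)} # E1) x' y'"
      and v2: "veq s2 ({(x,z)} # E2) x' z'"
    show "veq tau ({(y,z)} # E3) y' z'"
    proof (cases "x' = x")
      case True
      then show ?thesis using v1 v2 by (auto split: if_splits)
    next
      case False
      then have "y' \<noteq> y" "z' \<noteq> z" "veq s1 E1 x' y'" "veq s2 E2 x' z'"
        using v1 v2 by (auto split: if_splits)
      moreover have "veq tau E3 y' z'" using All.prems(3) x' False calculation by auto
      ultimately show ?thesis by auto
    qed
  qed
  then show ?case using b by simp
qed


lemma veq_cong: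
  "veq s E x y \<Longrightarrow> (x \<notin> \<Union>(Domain ` set E) \<Longrightarrow> s x = s' x) \<Longrightarrow> veq s' E x y"
  by (induction E) (auto split: if_splits)

lemma cong_trm:
  "aeq_trm t s E u \<Longrightarrow> (\<forall>x\<in>fv_trm t. x \<notin> \<Union>(Domain ` set E) \<longrightarrow> s x = s' x) \<Longrightarrow>
   aeq_trm t s' E u"
proof (induction t arbitrary: u)
  case (Var x)
  obtain y where y: "u = Var y" "veq s E x y" using Var.prems(1) by (cases u) auto
  then show ?case using veq_cong[of s E x y s'] Var.prems(2) by simp
next
  case (Fn f ts)
  obtain us where u: "u = Fn f us" and l1: "list_all2 (\<lambda>t u. aeq_trm t s E u) ts us"
    using Fn.prems(1) by (cases u) (auto simp: list_all2_map1)
  have "list_all2 (\<lambda>t u. aeq_trm t s' E u) ts us"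
    unfolding list_all2_conv_all_nth
  proof (intro conjI allI impI)
    show "length ts = length us" using l1 by (simp add: list_all2_conv_all_nth)
    fix i assume i: "i < length ts"
    show "aeq_trm (ts ! i) s' E (us ! i)"
    proof (rule Fn.IH)
      show "ts ! i \<in> set ts" using i by simp
      show "aeq_trm (ts ! i) s E (us ! i)" using l1 i by (simp add: list_all2_conv_all_nth)
      show "\<forall>x\<in>fv_trm (ts ! i). x \<notin> \<Union>(Domain ` set E) \<longrightarrow> s x = s' x"
      proof -
        have "fv_trm (ts ! i) \<subseteq> fv_trm (Fn f ts)" using i nth_mem by fastforce
        then show ?thesis using Fn.prems(2) by blast
      qed
    qed
  qed
  then show ?case using u by (simp add: list_all2_map1)
qed

lemma cong_fm:
  "aeq_fm A s E B \<Longrightarrow> (\<forall>x\<in>fv_fm A. x \<notin> \<Union>(Domain ` set E) \<longrightarrow> s x = s' x) \<Longrightarrow>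
   aeq_fm A s' E B"
proof (induction A arbitrary: B E)
  case (Pred P ts)
  obtain us where u: "B = Pred P us" and l1: "list_all2 (\<lambda>t u. aeq_trm t s E u) ts us"
    using Pred.prems(1) by (cases B) auto
  have "list_all2 (\<lambda>t u. aeq_trm t s' E u) ts us"
    unfolding list_all2_conv_all_nth
  proof (intro conjI allI impI)
    show "length ts = length us" using l1 by (simp add: list_all2_conv_all_nth)
    fix i assume i: "i < length ts"
    show "aeq_trm (ts ! i) s' E (us ! i)"
    proof (rule cong_trm)
      show "aeq_trm (ts ! i) s E (us ! i)" using l1 i by (simp add: list_all2_conv_all_nth)
      have "fv_trm (ts ! i) \<subseteq> fv_fm (Pred P ts)" using i nth_mem by fastforce
      then show "\<forall>x\<in>fv_trm (ts ! i). x \<notin> \<Union>(Domain ` set E) \<longrightarrow> s x = s' x"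
        using Pred.prems(2) by blast
    qed
  qed
  then show ?case using u by simp
next
  case (Imp A1 A2)
  obtain B1 B2 where b: "B = Imp B1 B2" and h: "aeq_fm A1 s E B1" "aeq_fm A2 s E B2"
    using Imp.prems(1) by (cases B) auto
  have "aeq_fm A1 s' E B1" by (rule Imp.IH(1)[OF h(1)]) (use Imp.prems(2) in \<open>simp only: fv_fm.simps, blast\<close>)
  moreover have "aeq_fm A2 s' E B2" by (rule Imp.IH(2)[OF h(2)]) (use Imp.prems(2) in \<open>simp only: fv_fm.simps, blast\<close>)
  ultimately show ?case using b by simp
next
  case (All x A)
  obtain y B' where b: "B = All y B'" and h1: "aeq_fm A s ({(x,y)} # E) B'"
    using All.prems(1) by (cases B) auto
  have "aeq_fm A s' ({(x,y)} # E) B'"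
  proof (rule All.IH[OF h1], intro ballI impI)
    fix x' assume "x' \<in> fv_fm A" "x' \<notin> \<Union>(Domain ` set ({(x,y)} # E))"
    then show "s x' = s' x'" using All.prems(2) by auto
  qed
  then show ?case using b by simp
qed

lemma fvpres_trm:
  "aeq_trm t s E u \<Longrightarrow> x \<in> fv_trm t \<Longrightarrow> \<exists>y. veq s E x y \<and> y \<in> fv_trm u"
proof (induction t arbitrary: u)
  case (Var x)
  obtain y where y: "u = Var y" "veq s E x y" using Var.prems(1) by (cases u) auto
  then show ?case using Var.prems(2) by simp
next
  case (Fn f ts)
  obtain us where u: "u = Fn f us" and l1: "list_all2 (\<lambda>t u. aeq_trm t s E u) ts us"
    using Fn.prems(1) by (cases u) (auto simp: list_all2_map1)
  from Fn.prems(2) obtain i where i: "i < length ts" "x \<in> fv_trm (ts ! i)"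
    by (auto simp: in_set_conv_nth)
  have "aeq_trm (ts ! i) s E (us ! i)" using l1 i by (simp add: list_all2_conv_all_nth)
  with Fn.IH[of "ts ! i"] i obtain y where "veq s E x y" "y \<in> fv_trm (us ! i)" by auto
  moreover have "i < length us" using l1 i by (simp add: list_all2_conv_all_nth)
  moreover have "fv_trm (us ! i) \<subseteq> fv_trm u" using u \<open>i < length us\<close> nth_mem by fastforce
  ultimately show ?case by blast
qed

lemma fvpres_fm:
  "aeq_fm A s E B \<Longrightarrow> x \<in> fv_fm A \<Longrightarrow> \<exists>y. veq s E x y \<and> y \<in> fv_fm B"
proof (induction A arbitrary: B E)
  case (Pred P ts)
  obtain us where u: "B = Pred P us" and l1: "list_all2 (\<lambda>t u. aeq_trm t s E u) ts us"
    using Pred.prems(1) by (cases B) auto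
  from Pred.prems(2) obtain i where i: "i < length ts" "x \<in> fv_trm (ts ! i)"
    by (auto simp: in_set_conv_nth)
  have "aeq_trm (ts ! i) s E (us ! i)" using l1 i by (simp add: list_all2_conv_all_nth)
  with fvpres_trm i obtain y where "veq s E x y" "y \<in> fv_trm (us ! i)" by blast
  moreover have "i < length us" using l1 i by (simp add: list_all2_conv_all_nth)
  moreover have "fv_trm (us ! i) \<subseteq> fv_fm B" using u \<open>i < length us\<close> nth_mem by fastforce
  ultimately show ?case by blast
next
  case (Imp A1 A2)
  obtain B1 B2 where b: "B = Imp B1 B2" and h: "aeq_fm A1 s E B1" "aeq_fm A2 s E B2"
    using Imp.prems(1) by (cases B) auto
  show ?case
  proof (cases "x \<in> fv_fm A1")
    case True
    then show ?thesis using Imp.IH(1)[OF h(1)] b by auto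
  next
    case False
    then have "x \<in> fv_fm A2" using Imp.prems(2) by simp
    then show ?thesis using Imp.IH(2)[OF h(2)] b by auto
  qed
next
  case (All x0 A)
  obtain y0 B' where b: "B = All y0 B'" and h1: "aeq_fm A s ({(x0,y0)} # E) B'"
    using All.prems(1) by (cases B) auto
  have "x \<in> fv_fm A" "x \<noteq> x0" using All.prems(2) by auto
  with All.IH[OF h1] obtain y where "veq s ({(x0,y0)} # E) x y" "y \<in> fv_fm B'" by blast
  with \<open>x \<noteq> x0\<close> have "veq s E x y" "y \<noteq> y0" by (auto split: if_splits)
  then show ?case using b \<open>y \<in> fv_fm B'\<close> by auto
qed


lemma in_sum_image: "x \<in># sum_mset (image_mset f G) \<longleftrightarrow> (\<exists>J\<in>#G. x \<in># f J)"
  by (induction G) auto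

lemma bnd_ctx_add[simp]: "bnd_ctx (add_mset J G) = bnd_item J + bnd_ctx G"
  by (simp add: bnd_ctx_def)
lemma bnd_ctx_plus[simp]: "bnd_ctx (G + H) = bnd_ctx G + bnd_ctx H"
  by (simp add: bnd_ctx_def)
lemma bnd_ctx_empty[simp]: "bnd_ctx {#} = {#}"
  by (simp add: bnd_ctx_def)
lemma fv_ctx_add[simp]: "fv_ctx (add_mset J G) = fv_item J \<union> fv_ctx G"
  by (simp add: fv_ctx_def)
lemma fv_ctx_plus[simp]: "fv_ctx (G + H) = fv_ctx G \<union> fv_ctx H"
  by (simp add: fv_ctx_def)
lemma fv_ctx_empty[simp]: "fv_ctx {#} = {}"
  by (simp add: fv_ctx_def)
lemma flatten_add[simp]: "flatten_ctx (add_mset J G) = erase J + flatten_ctx G"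
  by (simp add: flatten_ctx_def)
lemma flatten_plus[simp]: "flatten_ctx (G + H) = flatten_ctx G + flatten_ctx H"
  by (simp add: flatten_ctx_def)
lemma flatten_empty[simp]: "flatten_ctx {#} = {#}"
  by (simp add: flatten_ctx_def)
lemma fv_item_Br: "fv_item (Br V G) = fv_ctx G - fset V"
  by (simp add: fv_ctx_def)
lemma bnd_item_Br: "bnd_item (Br V G) = mset_set (fset V) + bnd_ctx G"
  by (simp add: bnd_ctx_def)
lemma erase_Br: "erase (Br V G) = flatten_ctx G"
  by (simp add: flatten_ctx_def)
lemma set_bnd_Br: "set_mset (bnd_item (Br V G)) = fset V \<union> set_mset (bnd_ctx G)"
  by (simp add: bnd_item_Br del: bnd_item.simps)
lemma in_flatten: "A \<in># flatten_ctx G \<longleftrightarrow> (\<exists>J\<in>#G. A \<in># erase J)"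
  by (simp add: flatten_ctx_def in_sum_image)
lemma fv_ctx_mem: "J \<in># G \<Longrightarrow> fv_item J \<subseteq> fv_ctx G"
  by (auto simp: fv_ctx_def)
lemma bnd_ctx_mem: "J \<in># G \<Longrightarrow> bnd_ctx G = bnd_item J + bnd_ctx (G - {#J#})"
  by (metis bnd_ctx_add insert_DiffM)

lemma count_le1_disj:
  assumes "\<forall>x. count (M + N) x \<le> 1" shows "set_mset M \<inter> set_mset N = {}"
proof -
  { fix x assume a: "x \<in># M" "x \<in># N"
    then have "0 < count M x" "0 < count N x" by auto
    moreover have "count M x + count N x \<le> 1" using assms by (metis count_union)
    ultimately have False by linarith }
  then show ?thesis by blast
qed

lemma count_le1_sub1: "\<forall>x. count (M + N) x \<le> 1 \<Longrightarrow> \<forall>x. count M x \<le> 1"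
  by (metis count_union le_add1 order_trans)
lemma count_le1_sub2: "\<forall>x. count (M + N) x \<le> 1 \<Longrightarrow> \<forall>x. count N x \<le> 1"
  by (metis count_union le_add2 order_trans)

lemma fv_erase: "A \<in># erase J \<Longrightarrow> fv_fm A \<subseteq> fv_item J \<union> set_mset (bnd_item J)"
proof (induction J arbitrary: A)
  case (Fm B)
  then show ?case by simp
next
  case (Br V G)
  then obtain J where J: "J \<in># G" "A \<in># erase J" by (auto simp: in_sum_image)
  then have "fv_fm A \<subseteq> fv_item J \<union> set_mset (bnd_item J)" using Br.IH by blast
  moreover have "fv_item J \<subseteq> fv_item (Br V G) \<union> fset V" using fv_ctx_mem[OF J(1)] fv_item_Br by blast
  moreover have "set_mset (bnd_item J) \<subseteq> set_mset (bnd_ctx G)"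
    using bnd_ctx_mem[OF J(1)] by (metis set_mset_union Un_upper1)
  then have "set_mset (bnd_item J) \<subseteq> set_mset (bnd_item (Br V G))"
    using set_bnd_Br by blast
  moreover have "fset V \<subseteq> set_mset (bnd_item (Br V G))" using set_bnd_Br by auto
  ultimately show ?case by blast
qed

definition fr :: "('f, 'p) ljb_ctx \<Rightarrow> bool" where
  "fr G \<longleftrightarrow> (\<forall>x. count (bnd_ctx G) x \<le> 1) \<and> fv_ctx G \<inter> set_mset (bnd_ctx G) = {}"

lemma fr_plus1: "fr (G + H) \<Longrightarrow> fr G"
  unfolding fr_def using count_le1_sub1 by fastforce

lemma fr_plus2: "fr (G + H) \<Longrightarrow> fr H"
  by (metis fr_plus1 add.commute)

lemma fr_child:
  assumes "fr G" "Br W H \<in># G" shows "fr H"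
proof -
  have b: "bnd_ctx G = mset_set (fset W) + bnd_ctx H + bnd_ctx (G - {#Br W H#})"
    using bnd_ctx_mem[OF assms(2)] bnd_item_Br by simp
  have c: "\<forall>x. count (bnd_ctx G) x \<le> 1" using assms(1) fr_def by blast
  then have c1: "\<forall>x. count (mset_set (fset W) + bnd_ctx H) x \<le> 1"
    using b count_le1_sub1 by metis
  then have "\<forall>x. count (bnd_ctx H) x \<le> 1" using count_le1_sub2 by blast
  moreover have "fset W \<inter> set_mset (bnd_ctx H) = {}"
    using count_le1_disj[OF c1] by simp
  moreover have "fv_ctx H \<subseteq> fv_ctx G \<union> fset W" using fv_ctx_mem[OF assms(2)] fv_item_Br by blast
  moreover have "fv_ctx G \<inter> set_mset (bnd_ctx H) = {}" using assms(1) b unfolding fr_def by auto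
  ultimately show ?thesis unfolding fr_def by blast
qed

lemma fr_sep:
  assumes "fr G" "J \<in># G" "A \<in># erase J"
  shows "fv_fm A \<inter> set_mset (bnd_ctx (G - {#J#})) = {}"
proof -
  have b: "bnd_ctx G = bnd_item J + bnd_ctx (G - {#J#})" using bnd_ctx_mem[OF assms(2)] .
  have "set_mset (bnd_item J) \<inter> set_mset (bnd_ctx (G - {#J#})) = {}"
    using count_le1_disj assms(1) b unfolding fr_def by metis
  moreover have "fv_item J \<inter> set_mset (bnd_ctx (G - {#J#})) = {}"
    using assms(1) b fv_ctx_mem[OF assms(2)] unfolding fr_def by auto
  ultimately show ?thesis using fv_erase[OF assms(3)] by blast
qed


lemma rel_cong:
  assumes "rel_mset (\<lambda>A B. aeq_fm A sa [] B) M1 M2" "\<forall>A\<in>#M1. \<forall>y\<in>fv_fm A. s y = sa y"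
  shows "rel_mset (\<lambda>A B. aeq_fm A s [] B) M1 M2"
  using assms(1)
proof (rule multiset.rel_mono_strong)
  fix A B assume "A \<in># M1" "aeq_fm A sa [] B"
  then show "aeq_fm A s [] B" using cong_fm[of A sa "[]" B s] assms(2) by auto
qed

lemma merge:
  assumes "rel_mset (\<lambda>A B. aeq_fm A sa [] B) M1 M2" "rel_mset (\<lambda>A B. aeq_fm A sb [] B) N1 N2"
    "\<forall>A\<in>#M1. \<forall>y\<in>fv_fm A. s y = sa y" "\<forall>A\<in>#N1. \<forall>y\<in>fv_fm A. s y = sb y"
  shows "rel_mset (\<lambda>A B. aeq_fm A s [] B) (M1 + N1) (M2 + N2)"
  using rel_mset_add[OF rel_cong[OF assms(1,3)] rel_cong[OF assms(2,4)]] .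

lemma combine:
  "rel_mset (\<lambda>J1 J2. \<exists>s. (\<forall>y. y \<notin># bnd_item J1 \<longrightarrow> s y = tau y) \<and>
       rel_mset (\<lambda>A B. aeq_fm A s [] B) (erase J1) (erase J2)) G1 G2 \<Longrightarrow>
   (\<forall>J\<in>#G1. \<forall>A\<in>#erase J. fv_fm A \<inter> set_mset (bnd_ctx (G1 - {#J#})) = {}) \<Longrightarrow>
   \<exists>s. (\<forall>y. y \<notin># bnd_ctx G1 \<longrightarrow> s y = tau y) \<and>
       rel_mset (\<lambda>A B. aeq_fm A s [] B) (flatten_ctx G1) (flatten_ctx G2)"
proof (induction G1 arbitrary: G2)
  case empty
  then show ?case by auto
next
  case (add J1 G1)
  from msed_rel_invL[OF add.prems(1)] obtain G2' J2 where
    g: "G2 = add_mset J2 G2'" and q: "\<exists>s. (\<forall>y. y \<notin># bnd_item J1 \<longrightarrow> s y = tau y) \<and>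
       rel_mset (\<lambda>A B. aeq_fm A s [] B) (erase J1) (erase J2)"
    and r: "rel_mset (\<lambda>J1 J2. \<exists>s. (\<forall>y. y \<notin># bnd_item J1 \<longrightarrow> s y = tau y) \<and>
       rel_mset (\<lambda>A B. aeq_fm A s [] B) (erase J1) (erase J2)) G1 G2'" by blast
  have sep: "\<forall>J\<in>#G1. \<forall>A\<in>#erase J. fv_fm A \<inter> set_mset (bnd_ctx (G1 - {#J#})) = {}"
  proof (intro ballI)
    fix J A assume J: "J \<in># G1" and A: "A \<in># erase J"
    have "add_mset J1 G1 - {#J#} = add_mset J1 (G1 - {#J#})" using J by simp
    then show "fv_fm A \<inter> set_mset (bnd_ctx (G1 - {#J#})) = {}"
      using add.prems(2) J A by fastforce
  qed
  from add.IH[OF r sep] obtain s' where s': "\<forall>y. y \<notin># bnd_ctx G1 \<longrightarrow> s' y = tau y"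
    "rel_mset (\<lambda>A B. aeq_fm A s' [] B) (flatten_ctx G1) (flatten_ctx G2')" by blast
  from q obtain sj where sj: "\<forall>y. y \<notin># bnd_item J1 \<longrightarrow> sj y = tau y"
    "rel_mset (\<lambda>A B. aeq_fm A sj [] B) (erase J1) (erase J2)" by blast
  define s where "s = (\<lambda>y. if y \<in># bnd_item J1 then sj y else s' y)"
  have "rel_mset (\<lambda>A B. aeq_fm A s [] B) (erase J1 + flatten_ctx G1) (erase J2 + flatten_ctx G2')"
  proof (rule merge[OF sj(2) s'(2)])
    show "\<forall>A\<in>#erase J1. \<forall>y\<in>fv_fm A. s y = sj y"
    proof (intro ballI)
      fix A y assume A: "A \<in># erase J1" and y: "y \<in> fv_fm A"
      have "y \<notin># bnd_ctx G1" using add.prems(2) A y by fastforce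
      then show "s y = sj y" using s' sj unfolding s_def by auto
    qed
    show "\<forall>A\<in>#flatten_ctx G1. \<forall>y\<in>fv_fm A. s y = s' y"
    proof (intro ballI)
      fix A y assume A: "A \<in># flatten_ctx G1" and y: "y \<in> fv_fm A"
      then obtain J where J: "J \<in># G1" "A \<in># erase J" by (auto simp: in_flatten)
      have "add_mset J1 G1 - {#J#} = add_mset J1 (G1 - {#J#})" using J by simp
      then have "y \<notin># bnd_item J1" using add.prems(2) J y by fastforce
      then show "s y = s' y" unfolding s_def by auto
    qed
  qed
  moreover have "\<forall>y. y \<notin># bnd_ctx (add_mset J1 G1) \<longrightarrow> s y = tau y"
    using s'(1) unfolding s_def by auto
  ultimately show ?case using g by auto
qed


definition item_prop :: "('f, 'p) item \<Rightarrow> bool" where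
  "item_prop I \<longleftrightarrow> (\<forall>E1 E2 I1 I2 tau. aeq_item I id E1 I1 \<longrightarrow> aeq_item I id E2 I2 \<longrightarrow>
    (\<forall>x\<in>fv_item I. \<forall>y z. veq id E1 x y \<longrightarrow> veq id E2 x z \<longrightarrow> tau y = z) \<longrightarrow>
    (\<forall>W H. I1 = Br W H \<longrightarrow> fr H) \<longrightarrow>
    (\<exists>s. (\<forall>y. y \<notin># bnd_item I1 \<longrightarrow> s y = tau y) \<and>
         rel_mset (\<lambda>A B. aeq_fm A s [] B) (erase I1) (erase I2)))"

lemma ctx_from_items:
  assumes ip: "\<forall>J\<in>#G. item_prop J"
    and r1: "rel_mset (\<lambda>I J. aeq_item I id E1 J) G G1"
    and r2: "rel_mset (\<lambda>I J. aeq_item I id E2 J) G G2"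
    and h: "\<forall>x\<in>fv_ctx G. \<forall>y z. veq id E1 x y \<longrightarrow> veq id E2 x z \<longrightarrow> tau y = z"
    and f: "fr G1"
  shows "\<exists>s. (\<forall>y. y \<notin># bnd_ctx G1 \<longrightarrow> s y = tau y) \<and>
       rel_mset (\<lambda>A B. aeq_fm A s [] B) (flatten_ctx G1) (flatten_ctx G2)"
proof -
  have r1': "rel_mset (\<lambda>I J. I \<in># G \<and> aeq_item I id E1 J) G G1"
    using r1 by (rule multiset.rel_mono_strong) auto
  have "rel_mset (\<lambda>I J. I \<in># G \<and> aeq_item I id E1 J)\<inverse>\<inverse> G1 G"
    using r1' by (simp add: multiset.rel_flip)
  then have "(rel_mset (\<lambda>I J. I \<in># G \<and> aeq_item I id E1 J)\<inverse>\<inverse> OO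
      rel_mset (\<lambda>I J. aeq_item I id E2 J)) G1 G2" using r2 by blast
  then have rc: "rel_mset ((\<lambda>I J. I \<in># G \<and> aeq_item I id E1 J)\<inverse>\<inverse> OO
      (\<lambda>I J. aeq_item I id E2 J)) G1 G2"
    by (simp add: multiset.rel_compp multiset.rel_conversep)
  have "rel_mset (\<lambda>J1 J2. \<exists>s. (\<forall>y. y \<notin># bnd_item J1 \<longrightarrow> s y = tau y) \<and>
       rel_mset (\<lambda>A B. aeq_fm A s [] B) (erase J1) (erase J2)) G1 G2"
    using rc
  proof (rule multiset.rel_mono_strong)
    fix J1 J2 assume J1: "J1 \<in># G1" and
      "((\<lambda>I J. I \<in># G \<and> aeq_item I id E1 J)\<inverse>\<inverse> OO (\<lambda>I J. aeq_item I id E2 J)) J1 J2"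
    then obtain J where J: "J \<in># G" "aeq_item J id E1 J1" "aeq_item J id E2 J2" by auto
    have "item_prop J" using ip J(1) by blast
    moreover have "\<forall>x\<in>fv_item J. \<forall>y z. veq id E1 x y \<longrightarrow> veq id E2 x z \<longrightarrow> tau y = z"
      using h fv_ctx_mem[OF J(1)] by blast
    moreover have "\<forall>W H. J1 = Br W H \<longrightarrow> fr H" using fr_child[OF f] J1 by blast
    ultimately show "\<exists>s. (\<forall>y. y \<notin># bnd_item J1 \<longrightarrow> s y = tau y) \<and>
       rel_mset (\<lambda>A B. aeq_fm A s [] B) (erase J1) (erase J2)"
      using J unfolding item_prop_def by blast
  qed
  moreover have "\<forall>J\<in>#G1. \<forall>A\<in>#erase J. fv_fm A \<inter> set_mset (bnd_ctx (G1 - {#J#})) = {}"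
    using fr_sep[OF f] by blast
  ultimately show ?thesis by (rule combine)
qed


lemma veq_layer:
  assumes "veq s ({(x, f x) | x. x \<in> A} # E) u y"
  shows "(u \<in> A \<and> y = f u) \<or> (u \<notin> A \<and> y \<notin> f ` A \<and> veq s E u y)"
proof -
  have d: "Domain {(x, f x) | x. x \<in> A} = A" by auto
  have r: "Range {(x, f x) | x. x \<in> A} = f ` A" by auto
  have m: "(u, y) \<in> {(x, f x) | x. x \<in> A} \<longleftrightarrow> u \<in> A \<and> y = f u" by auto
  show ?thesis using assms unfolding veq.simps(2) d r m by (auto split: if_splits)
qed

lemma all_item_prop: "item_prop I"
proof (induction I)
  case (Fm C)
  show ?case unfolding item_prop_def
  proof (intro allI impI)
    fix E1 E2 I1 I2 tau
    assume a1: "aeq_item (Fm C) id E1 I1" and a2: "aeq_item (Fm C) id E2 I2"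
      and h: "\<forall>x\<in>fv_item (Fm C). \<forall>y z. veq id E1 x y \<longrightarrow> veq id E2 x z \<longrightarrow> tau y = z"
    obtain C1 where c1: "I1 = Fm C1" "aeq_fm C id E1 C1" using a1 by (cases I1) auto
    obtain C2 where c2: "I2 = Fm C2" "aeq_fm C id E2 C2" using a2 by (cases I2) auto
    have "aeq_fm C1 tau [] C2"
      by (rule trans_fm[OF c1(2) c2(2)]) (use h in simp)
    then have "rel_mset (\<lambda>A B. aeq_fm A tau [] B) (erase I1) (erase I2)"
      using c1 c2 rel_mset_Plus[OF _ rel_mset_Zero] by simp
    then show "\<exists>s. (\<forall>y. y \<notin># bnd_item I1 \<longrightarrow> s y = tau y) \<and>
         rel_mset (\<lambda>A B. aeq_fm A s [] B) (erase I1) (erase I2)" by blast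
  qed
next
  case (Br V G)
  show ?case unfolding item_prop_def
  proof (intro allI impI)
    fix E1 E2 I1 I2 tau
    assume a1: "aeq_item (Br V G) id E1 I1" and a2: "aeq_item (Br V G) id E2 I2"
      and h: "\<forall>x\<in>fv_item (Br V G). \<forall>y z. veq id E1 x y \<longrightarrow> veq id E2 x z \<longrightarrow> tau y = z"
      and f: "\<forall>W H. I1 = Br W H \<longrightarrow> fr H"
    obtain W1 G1 f1 where i1: "I1 = Br W1 G1" and b1: "bij_betw f1 (fset V) (fset W1)"
      and r1: "rel_mset (\<lambda>P J. P id ({(x, f1 x) | x. x \<in> fset V} # E1) J) (image_mset aeq_item G) G1"
      using a1 by (cases I1) auto
    obtain W2 G2 f2 where i2: "I2 = Br W2 G2" and b2: "bij_betw f2 (fset V) (fset W2)"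
      and r2: "rel_mset (\<lambda>P J. P id ({(x, f2 x) | x. x \<in> fset V} # E2) J) (image_mset aeq_item G) G2"
      using a2 by (cases I2) auto
    have r1': "rel_mset (\<lambda>I J. aeq_item I id ({(x, f1 x) | x. x \<in> fset V} # E1) J) G G1"
      using r1 by (simp add: multiset.rel_map)
    have r2': "rel_mset (\<lambda>I J. aeq_item I id ({(x, f2 x) | x. x \<in> fset V} # E2) J) G G2"
      using r2 by (simp add: multiset.rel_map)
    define tau' where "tau' = (\<lambda>y. if y \<in> fset W1 then f2 (inv_into (fset V) f1 y) else tau y)"
    have w1: "f1 ` fset V = fset W1" using b1 by (simp add: bij_betw_def)
    have w2: "f2 ` fset V = fset W2" using b2 by (simp add: bij_betw_def)
    have hyp: "\<forall>x\<in>fv_ctx G. \<forall>y z. veq id ({(x, f1 x) | x. x \<in> fset V} # E1) x y \<longrightarrow>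
        veq id ({(x, f2 x) | x. x \<in> fset V} # E2) x z \<longrightarrow> tau' y = z"
    proof (intro ballI allI impI)
      fix x y z assume x: "x \<in> fv_ctx G"
        and v1: "veq id ({(x, f1 x) | x. x \<in> fset V} # E1) x y"
        and v2: "veq id ({(x, f2 x) | x. x \<in> fset V} # E2) x z"
      show "tau' y = z"
      proof (cases "x \<in> fset V")
        case True
        then have "y = f1 x" "z = f2 x" using veq_layer[OF v1] veq_layer[OF v2] by auto
        moreover have "f1 x \<in> fset W1" using True w1 by blast
        moreover have "inv_into (fset V) f1 (f1 x) = x"
          using True b1 by (simp add: bij_betw_def)
        ultimately show ?thesis unfolding tau'_def by simp
      next
        case False
        then have "y \<notin> fset W1" "veq id E1 x y" "veq id E2 x z"
          using veq_layer[OF v1] veq_layer[OF v2] w1 by auto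
        moreover have "x \<in> fv_item (Br V G)" using x False fv_item_Br by blast
        ultimately show ?thesis using h unfolding tau'_def by simp
      qed
    qed
    have frG1: "fr G1" using f i1 by blast
    have ip: "\<forall>J\<in>#G. item_prop J" using Br.IH by blast
    obtain s where s: "\<forall>y. y \<notin># bnd_ctx G1 \<longrightarrow> s y = tau' y"
      "rel_mset (\<lambda>A B. aeq_fm A s [] B) (flatten_ctx G1) (flatten_ctx G2)"
      using ctx_from_items[OF ip r1' r2' hyp frG1] by blast
    have "\<forall>y. y \<notin># bnd_item I1 \<longrightarrow> s y = tau y"
      using s(1) unfolding i1 set_bnd_Br tau'_def by auto
    moreover have "rel_mset (\<lambda>A B. aeq_fm A s [] B) (erase I1) (erase I2)"
      using s(2) unfolding i1 i2 erase_Br .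
    ultimately show "\<exists>s. (\<forall>y. y \<notin># bnd_item I1 \<longrightarrow> s y = tau y) \<and>
         rel_mset (\<lambda>A B. aeq_fm A s [] B) (erase I1) (erase I2)" by blast
  qed
qed

lemma ctx_lemma:
  assumes "rel_mset (\<lambda>I J. aeq_item I id E1 J) G G1"
    and "rel_mset (\<lambda>I J. aeq_item I id E2 J) G G2"
    and "\<forall>x\<in>fv_ctx G. \<forall>y z. veq id E1 x y \<longrightarrow> veq id E2 x z \<longrightarrow> tau y = z"
    and "fr G1"
  shows "\<exists>s. (\<forall>y. y \<notin># bnd_ctx G1 \<longrightarrow> s y = tau y) \<and>
       rel_mset (\<lambda>A B. aeq_fm A s [] B) (flatten_ctx G1) (flatten_ctx G2)"
  using ctx_from_items[OF _ assms] all_item_prop by blast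

lemma unpack_br:
  assumes "aeq_item (Br V G) id E I"
  shows "\<exists>W H f. I = Br W H \<and> bij_betw f (fset V) (fset W) \<and>
     rel_mset (\<lambda>I J. aeq_item I id ({(x, f x) | x. x \<in> fset V} # E) J) G H"
proof -
  obtain W H f where i: "I = Br W H" and b: "bij_betw f (fset V) (fset W)"
    and r: "rel_mset (\<lambda>P J. P id ({(x, f x) | x. x \<in> fset V} # E) J) (image_mset aeq_item G) H"
    using assms by (cases I) auto
  have "rel_mset (\<lambda>I J. aeq_item I id ({(x, f x) | x. x \<in> fset V} # E) J) G H"
    using r by (simp add: multiset.rel_map)
  then show ?thesis using i b by blast
qed

lemma unpack_flat:
  assumes "is_flattening (S, F) (G, A)"
  shows "\<exists>C A'. rel_mset (\<lambda>I J. aeq_item I id [] J) G C \<and> aeq_fm A id [] A' \<and> fr C \<and>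
    fv_fm A' \<inter> set_mset (bnd_ctx C) = {} \<and> S = flatten_ctx C \<and> F = A'"
proof -
  obtain C A' where f: "fresh_variant (C, A') (G, A)" "S = flatten_ctx C" "F = A'"
    using assms unfolding is_flattening_def by auto
  have r: "rel_mset (\<lambda>I J. aeq_item I id [] J) G C" "aeq_fm A id [] A'"
    using f(1) unfolding fresh_variant_def aeq_ljb_def by auto
  have fl: "\<forall>x. count (bnd_ctx C + bnd_fm A') x \<le> 1"
    "set_mset (bnd_ctx C + bnd_fm A') \<inter> (fv_ctx C \<union> fv_fm A') = {}"
    using f(1) unfolding fresh_variant_def fresh_ljb_def Let_def by auto
  have "fr C" unfolding fr_def using count_le1_sub1[OF fl(1)] fl(2) by auto
  moreover have "fv_fm A' \<inter> set_mset (bnd_ctx C) = {}" using fl(2) by auto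
  ultimately show ?thesis using r f by blast
qed

lemma veq_nil: "veq id [] x y \<longleftrightarrow> y = x"
  by auto

lemma veq_one:
  assumes "veq id [{(x, f x) | x. x \<in> A}] u y"
  shows "(u \<in> A \<and> y = f u) \<or> (u \<notin> A \<and> y \<notin> f ` A \<and> y = u)"
  using veq_layer[OF assms] by auto

lemma forward:
  fixes \<Gamma> \<Delta> :: "('f, 'p) ljb_ctx"
  assumes fvA: "fv_fm A \<inter> fset V = {}"
    and b1: "bij_betw f1 (fset V) (fset W1)"
    and b2: "bij_betw f2 (fset V) (fset W2)"
    and b3: "bij_betw f3 (fset V) (fset W3)"
    and rG1: "rel_mset (\<lambda>I J. aeq_item I id [] J) \<Gamma> \<Gamma>1"
    and rD1: "rel_mset (\<lambda>I J. aeq_item I id [{(x, f1 x) | x. x \<in> fset V}] J) \<Delta> \<Delta>1"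
    and rG2: "rel_mset (\<lambda>I J. aeq_item I id [{(x, f2 x) | x. x \<in> fset V}] J) \<Gamma> \<Gamma>2"
    and rD3: "rel_mset (\<lambda>I J. aeq_item I id [{(x, f3 x) | x. x \<in> fset V}] J) \<Delta> \<Delta>3"
    and a1: "aeq_fm A id [] A1" and a2: "aeq_fm A id [] A2"
    and fr1: "fr (add_mset (Br W1 \<Delta>1) \<Gamma>1)"
    and fA1: "fv_fm A1 \<inter> set_mset (bnd_ctx (add_mset (Br W1 \<Delta>1) \<Gamma>1)) = {}"
  shows "\<exists>s. aeq_lj s (flatten_ctx (add_mset (Br W1 \<Delta>1) \<Gamma>1), A1)
                      (flatten_ctx {#Br W2 \<Gamma>2, Br W3 \<Delta>3#}, A2)"
proof -
  define C1 where "C1 = add_mset (Br W1 \<Delta>1) \<Gamma>1"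
  define D1 where "D1 = Br W1 \<Delta>1"
  have w1: "f1 ` fset V = fset W1" using b1 by (simp add: bij_betw_def)
  have w2: "f2 ` fset V = fset W2" using b2 by (simp add: bij_betw_def)
  have w3: "f3 ` fset V = fset W3" using b3 by (simp add: bij_betw_def)
  define tauG where "tauG = (\<lambda>y. if y \<in> fset V then f2 y else y)"
  have "add_mset (Br W1 \<Delta>1) \<Gamma>1 = \<Gamma>1 + {#Br W1 \<Delta>1#}" by simp
  then have frG1: "fr \<Gamma>1" using fr1 fr_plus1[of \<Gamma>1 "{#Br W1 \<Delta>1#}"] by metis
  have frD1: "fr \<Delta>1" using fr_child[OF fr1, of W1 \<Delta>1] by simp
  obtain sG where sG: "\<forall>y. y \<notin># bnd_ctx \<Gamma>1 \<longrightarrow> sG y = tauG y"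
    "rel_mset (\<lambda>A B. aeq_fm A sG [] B) (flatten_ctx \<Gamma>1) (flatten_ctx \<Gamma>2)"
  proof -
    have "\<forall>x\<in>fv_ctx \<Gamma>. \<forall>y z. veq id [] x y \<longrightarrow> veq id [{(x, f2 x) | x. x \<in> fset V}] x z \<longrightarrow> tauG y = z"
    proof (intro ballI allI impI)
      fix x y z assume "veq id [] x y" "veq id [{(x, f2 x) | x. x \<in> fset V}] x z"
      then show "tauG y = z" using veq_one[of f2 "fset V" x z] unfolding tauG_def veq_nil by auto
    qed
    then show ?thesis using ctx_lemma[OF rG1 rG2 _ frG1] that by blast
  qed
  define tauD where "tauD = (\<lambda>y. if y \<in> fset W1 then f3 (inv_into (fset V) f1 y) else tauG y)"
  obtain sD where sD: "\<forall>y. y \<notin># bnd_ctx \<Delta>1 \<longrightarrow> sD y = tauD y"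
    "rel_mset (\<lambda>A B. aeq_fm A sD [] B) (flatten_ctx \<Delta>1) (flatten_ctx \<Delta>3)"
  proof -
    have "\<forall>x\<in>fv_ctx \<Delta>. \<forall>y z. veq id [{(x, f1 x) | x. x \<in> fset V}] x y \<longrightarrow>
        veq id [{(x, f3 x) | x. x \<in> fset V}] x z \<longrightarrow> tauD y = z"
    proof (intro ballI allI impI)
      fix x y z assume v1: "veq id [{(x, f1 x) | x. x \<in> fset V}] x y"
        and v3: "veq id [{(x, f3 x) | x. x \<in> fset V}] x z"
      show "tauD y = z"
      proof (cases "x \<in> fset V")
        case True
        then have "y = f1 x" "z = f3 x" using veq_one[OF v1] veq_one[OF v3] by auto
        moreover have "f1 x \<in> fset W1" using True w1 by blast
        moreover have "inv_into (fset V) f1 (f1 x) = x" using True b1 by (simp add: bij_betw_def)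
        ultimately show ?thesis unfolding tauD_def by simp
      next
        case False
        then have "y \<notin> fset W1" "y = x" "z = x" using veq_one[OF v1] veq_one[OF v3] w1 by auto
        then show ?thesis using False unfolding tauD_def tauG_def by simp
      qed
    qed
    then show ?thesis using ctx_lemma[OF rD1 rD3 _ frD1] that by blast
  qed
  define s where "s = (\<lambda>y. if y \<in># bnd_ctx \<Gamma>1 then sG y
     else if y \<in> fset W1 \<or> y \<in># bnd_ctx \<Delta>1 then sD y else tauG y)"
  have bC: "bnd_ctx C1 = bnd_item D1 + bnd_ctx \<Gamma>1" unfolding C1_def D1_def by simp
  have dsj: "set_mset (bnd_item D1) \<inter> set_mset (bnd_ctx \<Gamma>1) = {}"
  proof -
    have "\<forall>x. count (bnd_ctx C1) x \<le> 1" using fr1 unfolding fr_def C1_def by blast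
    then show ?thesis using count_le1_disj[of "bnd_item D1" "bnd_ctx \<Gamma>1"] bC by simp
  qed
  have fvC: "fv_ctx C1 \<inter> set_mset (bnd_ctx C1) = {}" using fr1 unfolding fr_def C1_def by blast
  have sbC: "set_mset (bnd_ctx C1) = fset W1 \<union> set_mset (bnd_ctx \<Delta>1) \<union> set_mset (bnd_ctx \<Gamma>1)"
    using bC set_bnd_Br[of W1 \<Delta>1] unfolding D1_def by (metis set_mset_union sup_assoc)
  have sbD: "set_mset (bnd_item D1) = fset W1 \<union> set_mset (bnd_ctx \<Delta>1)"
    unfolding D1_def by (rule set_bnd_Br)
  have fC: "fv_ctx C1 = fv_item D1 \<union> fv_ctx \<Gamma>1" unfolding C1_def D1_def by simp
  have "rel_mset (\<lambda>A B. aeq_fm A s [] B) (flatten_ctx \<Delta>1 + flatten_ctx \<Gamma>1) (flatten_ctx \<Delta>3 + flatten_ctx \<Gamma>2)"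
  proof (rule merge[OF sD(2) sG(2)])
    show "\<forall>A\<in>#flatten_ctx \<Delta>1. \<forall>y\<in>fv_fm A. s y = sD y"
    proof (intro ballI)
      fix B y assume B: "B \<in># flatten_ctx \<Delta>1" and y: "y \<in> fv_fm B"
      have "B \<in># erase D1" using B unfolding D1_def erase_Br .
      then have "y \<in> fv_item D1 \<union> set_mset (bnd_item D1)" using fv_erase y by blast
      then show "s y = sD y"
      proof
        assume "y \<in> fv_item D1"
        then have "y \<notin> set_mset (bnd_ctx C1)" using fvC fC by blast
        then show ?thesis using sD(1) sbC unfolding s_def tauD_def by auto
      next
        assume "y \<in> set_mset (bnd_item D1)"
        then show ?thesis using dsj sbD unfolding s_def by auto
      qed
    qed
    show "\<forall>A\<in>#flatten_ctx \<Gamma>1. \<forall>y\<in>fv_fm A. s y = sG y"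
    proof (intro ballI)
      fix B y assume B: "B \<in># flatten_ctx \<Gamma>1" and y: "y \<in> fv_fm B"
      then obtain J where J: "J \<in># \<Gamma>1" "B \<in># erase J" by (auto simp: in_flatten)
      then have "y \<in> fv_item J \<union> set_mset (bnd_item J)" using fv_erase y by blast
      then show "s y = sG y"
      proof
        assume "y \<in> fv_item J"
        then have "y \<in> fv_ctx C1" using fC fv_ctx_mem[OF J(1)] by blast
        then have "y \<notin> set_mset (bnd_ctx C1)" using fvC by blast
        then show ?thesis using sG(1) sbC unfolding s_def by auto
      next
        assume "y \<in> set_mset (bnd_item J)"
        then have "y \<in># bnd_ctx \<Gamma>1" using bnd_ctx_mem[OF J(1)] by (metis union_iff)
        then show ?thesis unfolding s_def by auto
      qed
    qed
  qed
  moreover have "aeq_fm A1 s [] A2"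
  proof (rule trans_fm[OF a1 a2], intro ballI allI impI)
    fix x y z assume x: "x \<in> fv_fm A" and "veq id [] x y" "veq id [] x z"
    then have yz: "y = x" "z = x" by auto
    obtain y' where "veq id [] x y'" "y' \<in> fv_fm A1" using fvpres_fm[OF a1 x] by blast
    then have "x \<in> fv_fm A1" by simp
    then have "x \<notin> set_mset (bnd_ctx C1)" using fA1 unfolding C1_def by blast
    moreover have "x \<notin> fset V" using x fvA by blast
    ultimately show "veq s [] y z" using yz sbC unfolding s_def tauG_def by auto
  qed
  moreover have "flatten_ctx (add_mset (Br W1 \<Delta>1) \<Gamma>1) = flatten_ctx \<Delta>1 + flatten_ctx \<Gamma>1"
    by (simp add: flatten_ctx_def)
  moreover have "flatten_ctx {#Br W2 \<Gamma>2, Br W3 \<Delta>3#} = flatten_ctx \<Delta>3 + flatten_ctx \<Gamma>2"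
    by (simp add: flatten_ctx_def add.commute)
  ultimately show ?thesis unfolding aeq_lj_def by auto
qed

lemma backward:
  fixes \<Gamma> \<Delta> :: "('f, 'p) ljb_ctx"
  assumes b1: "bij_betw f1 (fset V) (fset W1)"
    and b2: "bij_betw f2 (fset V) (fset W2)"
    and b3: "bij_betw f3 (fset V) (fset W3)"
    and rG1: "rel_mset (\<lambda>I J. aeq_item I id [] J) \<Gamma> \<Gamma>1"
    and rD1: "rel_mset (\<lambda>I J. aeq_item I id [{(x, f1 x) | x. x \<in> fset V}] J) \<Delta> \<Delta>1"
    and rG2: "rel_mset (\<lambda>I J. aeq_item I id [{(x, f2 x) | x. x \<in> fset V}] J) \<Gamma> \<Gamma>2"
    and rD3: "rel_mset (\<lambda>I J. aeq_item I id [{(x, f3 x) | x. x \<in> fset V}] J) \<Delta> \<Delta>3"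
    and a1: "aeq_fm A id [] A1" and a2: "aeq_fm A id [] A2"
    and fr2: "fr {#Br W2 \<Gamma>2, Br W3 \<Delta>3#}"
    and fA2: "fv_fm A2 \<inter> set_mset (bnd_ctx {#Br W2 \<Gamma>2, Br W3 \<Delta>3#}) = {}"
  shows "\<exists>s. aeq_lj s (flatten_ctx {#Br W2 \<Gamma>2, Br W3 \<Delta>3#}, A2)
                      (flatten_ctx (add_mset (Br W1 \<Delta>1) \<Gamma>1), A1)"
proof -
  define C2 where "C2 = {#Br W2 \<Gamma>2, Br W3 \<Delta>3#}"
  define G2 where "G2 = Br W2 \<Gamma>2"
  define D3 where "D3 = Br W3 \<Delta>3"
  have w1: "f1 ` fset V = fset W1" using b1 by (simp add: bij_betw_def)
  have w2: "f2 ` fset V = fset W2" using b2 by (simp add: bij_betw_def)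
  have w3: "f3 ` fset V = fset W3" using b3 by (simp add: bij_betw_def)
  have frG2: "fr \<Gamma>2" using fr_child[OF fr2, of W2 \<Gamma>2] by simp
  have frD3: "fr \<Delta>3" using fr_child[OF fr2, of W3 \<Delta>3] by simp
  define tauG where "tauG = (\<lambda>y. if y \<in> fset W2 then inv_into (fset V) f2 y else y)"
  obtain sG where sG: "\<forall>y. y \<notin># bnd_ctx \<Gamma>2 \<longrightarrow> sG y = tauG y"
    "rel_mset (\<lambda>A B. aeq_fm A sG [] B) (flatten_ctx \<Gamma>2) (flatten_ctx \<Gamma>1)"
  proof -
    have "\<forall>x\<in>fv_ctx \<Gamma>. \<forall>y z. veq id [{(x, f2 x) | x. x \<in> fset V}] x y \<longrightarrow> veq id [] x z \<longrightarrow> tauG y = z"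
    proof (intro ballI allI impI)
      fix x y z assume v2: "veq id [{(x, f2 x) | x. x \<in> fset V}] x y" and v0: "veq id [] x z"
      then have z: "z = x" by simp
      show "tauG y = z"
      proof (cases "x \<in> fset V")
        case True
        then have "y = f2 x" using veq_one[OF v2] by auto
        moreover have "f2 x \<in> fset W2" using True w2 by blast
        moreover have "inv_into (fset V) f2 (f2 x) = x" using True b2 by (simp add: bij_betw_def)
        ultimately show ?thesis unfolding tauG_def z by simp
      next
        case False
        then have "y \<notin> fset W2" "y = x" using veq_one[OF v2] w2 by auto
        then show ?thesis unfolding tauG_def z by simp
      qed
    qed
    then show ?thesis using ctx_lemma[OF rG2 rG1 _ frG2] that by blast
  qed
  define tauD where "tauD = (\<lambda>y. if y \<in> fset W3 then f1 (inv_into (fset V) f3 y) else y)"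
  obtain sD where sD: "\<forall>y. y \<notin># bnd_ctx \<Delta>3 \<longrightarrow> sD y = tauD y"
    "rel_mset (\<lambda>A B. aeq_fm A sD [] B) (flatten_ctx \<Delta>3) (flatten_ctx \<Delta>1)"
  proof -
    have "\<forall>x\<in>fv_ctx \<Delta>. \<forall>y z. veq id [{(x, f3 x) | x. x \<in> fset V}] x y \<longrightarrow>
        veq id [{(x, f1 x) | x. x \<in> fset V}] x z \<longrightarrow> tauD y = z"
    proof (intro ballI allI impI)
      fix x y z assume v3: "veq id [{(x, f3 x) | x. x \<in> fset V}] x y"
        and v1: "veq id [{(x, f1 x) | x. x \<in> fset V}] x z"
      show "tauD y = z"
      proof (cases "x \<in> fset V")
        case True
        then have "y = f3 x" "z = f1 x" using veq_one[OF v1] veq_one[OF v3] by auto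
        moreover have "f3 x \<in> fset W3" using True w3 by blast
        moreover have "inv_into (fset V) f3 (f3 x) = x" using True b3 by (simp add: bij_betw_def)
        ultimately show ?thesis unfolding tauD_def by simp
      next
        case False
        then have "y \<notin> fset W3" "y = x" "z = x" using veq_one[OF v1] veq_one[OF v3] w3 by auto
        then show ?thesis unfolding tauD_def by simp
      qed
    qed
    then show ?thesis using ctx_lemma[OF rD3 rD1 _ frD3] that by blast
  qed
  define s where "s = (\<lambda>y. if y \<in> fset W2 \<or> y \<in># bnd_ctx \<Gamma>2 then sG y
     else if y \<in> fset W3 \<or> y \<in># bnd_ctx \<Delta>3 then sD y else y)"
  have bC: "bnd_ctx C2 = bnd_item G2 + bnd_item D3" unfolding C2_def G2_def D3_def by simp
  have dsj: "set_mset (bnd_item G2) \<inter> set_mset (bnd_item D3) = {}"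
  proof -
    have "\<forall>x. count (bnd_ctx C2) x \<le> 1" using fr2 unfolding fr_def C2_def by blast
    then show ?thesis using count_le1_disj[of "bnd_item G2" "bnd_item D3"] bC by simp
  qed
  have fvC: "fv_ctx C2 \<inter> set_mset (bnd_ctx C2) = {}" using fr2 unfolding fr_def C2_def by blast
  have sbG: "set_mset (bnd_item G2) = fset W2 \<union> set_mset (bnd_ctx \<Gamma>2)"
    unfolding G2_def by (rule set_bnd_Br)
  have sbD: "set_mset (bnd_item D3) = fset W3 \<union> set_mset (bnd_ctx \<Delta>3)"
    unfolding D3_def by (rule set_bnd_Br)
  have sbC: "set_mset (bnd_ctx C2) = set_mset (bnd_item G2) \<union> set_mset (bnd_item D3)"
    using bC by simp
  have fC: "fv_ctx C2 = fv_item G2 \<union> fv_item D3" unfolding C2_def G2_def D3_def by simp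
  have RR: "rel_mset (\<lambda>A B. aeq_fm A s [] B) (flatten_ctx \<Gamma>2 + flatten_ctx \<Delta>3) (flatten_ctx \<Gamma>1 + flatten_ctx \<Delta>1)"
  proof (rule merge[OF sG(2) sD(2)])
    show "\<forall>A\<in>#flatten_ctx \<Gamma>2. \<forall>y\<in>fv_fm A. s y = sG y"
    proof (intro ballI)
      fix B y assume B: "B \<in># flatten_ctx \<Gamma>2" and y: "y \<in> fv_fm B"
      have "B \<in># erase G2" using B unfolding G2_def erase_Br .
      then have "y \<in> fv_item G2 \<union> set_mset (bnd_item G2)" using fv_erase y by blast
      then show "s y = sG y"
      proof
        assume "y \<in> fv_item G2"
        then have "y \<notin> set_mset (bnd_ctx C2)" using fvC fC by blast
        then show ?thesis using sG(1) sbC sbG sbD unfolding s_def tauG_def by auto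
      next
        assume "y \<in> set_mset (bnd_item G2)"
        then show ?thesis using sbG unfolding s_def by auto
      qed
    qed
    show "\<forall>A\<in>#flatten_ctx \<Delta>3. \<forall>y\<in>fv_fm A. s y = sD y"
    proof (intro ballI)
      fix B y assume B: "B \<in># flatten_ctx \<Delta>3" and y: "y \<in> fv_fm B"
      have "B \<in># erase D3" using B unfolding D3_def erase_Br .
      then have "y \<in> fv_item D3 \<union> set_mset (bnd_item D3)" using fv_erase y by blast
      then show "s y = sD y"
      proof
        assume "y \<in> fv_item D3"
        then have "y \<notin> set_mset (bnd_ctx C2)" using fvC fC by blast
        then show ?thesis using sD(1) sbC sbG sbD unfolding s_def tauD_def by auto
      next
        assume "y \<in> set_mset (bnd_item D3)"
        then show ?thesis using dsj sbG sbD unfolding s_def by auto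
      qed
    qed
  qed
  have FF: "aeq_fm A2 s [] A1"
  proof (rule trans_fm[OF a2 a1], intro ballI allI impI)
    fix x y z assume x: "x \<in> fv_fm A" and "veq id [] x y" "veq id [] x z"
    then have yz: "y = x" "z = x" by auto
    obtain y' where "veq id [] x y'" "y' \<in> fv_fm A2" using fvpres_fm[OF a2 x] by blast
    then have "x \<in> fv_fm A2" by simp
    then have "x \<notin> set_mset (bnd_ctx C2)" using fA2 unfolding C2_def by blast
    then show "veq s [] y z" using yz sbC sbG sbD unfolding s_def by auto
  qed
  have e1: "flatten_ctx (add_mset (Br W1 \<Delta>1) \<Gamma>1) = flatten_ctx \<Gamma>1 + flatten_ctx \<Delta>1"
    by (simp add: flatten_ctx_def add.commute)
  have e2: "flatten_ctx {#Br W2 \<Gamma>2, Br W3 \<Delta>3#} = flatten_ctx \<Gamma>2 + flatten_ctx \<Delta>3"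
    by (simp add: flatten_ctx_def)
  show ?thesis unfolding aeq_lj_def fst_conv snd_conv e1 e2 using RR FF by blast
qed

theorem proposition5:
  fixes \<Gamma> \<Delta> :: "('f, 'p) ljb_ctx" and A :: "('f, 'p) fm" and V :: "nat fset"
    and \<Sigma>1 \<Sigma>2 :: "('f, 'p) fm multiset" and E1 E2 :: "('f, 'p) fm"
  assumes "fv_fm A \<inter> fset V = {}"
    and "is_flattening (\<Sigma>1, E1) (\<Gamma> + {# Br V \<Delta> #}, A)"
    and "is_flattening (\<Sigma>2, E2) ({# Br V \<Gamma>, Br V \<Delta> #}, A)"
  shows "abar_equiv (\<Sigma>1, E1) (\<Sigma>2, E2)"
proof -
  obtain C1 A1 where u1: "rel_mset (\<lambda>I J. aeq_item I id [] J) (\<Gamma> + {# Br V \<Delta> #}) C1"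
    "aeq_fm A id [] A1" "fr C1" "fv_fm A1 \<inter> set_mset (bnd_ctx C1) = {}"
    "\<Sigma>1 = flatten_ctx C1" "E1 = A1"
    using unpack_flat[OF assms(2)] by blast
  obtain C2 A2 where u2: "rel_mset (\<lambda>I J. aeq_item I id [] J) {# Br V \<Gamma>, Br V \<Delta> #} C2"
    "aeq_fm A id [] A2" "fr C2" "fv_fm A2 \<inter> set_mset (bnd_ctx C2) = {}"
    "\<Sigma>2 = flatten_ctx C2" "E2 = A2"
    using unpack_flat[OF assms(3)] by blast
  have "rel_mset (\<lambda>I J. aeq_item I id [] J) (add_mset (Br V \<Delta>) \<Gamma>) C1" using u1(1) by simp
  from msed_rel_invL[OF this] obtain \<Gamma>1 D1 where c1: "C1 = add_mset D1 \<Gamma>1"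
    "aeq_item (Br V \<Delta>) id [] D1" and rG1: "rel_mset (\<lambda>I J. aeq_item I id [] J) \<Gamma> \<Gamma>1" by blast
  from unpack_br[OF c1(2)] obtain W1 \<Delta>1 f1 where d1: "D1 = Br W1 \<Delta>1"
    "bij_betw f1 (fset V) (fset W1)"
    "rel_mset (\<lambda>I J. aeq_item I id [{(x, f1 x) | x. x \<in> fset V}] J) \<Delta> \<Delta>1" by blast
  from msed_rel_invL[OF u2(1)] obtain N G2 where c2: "C2 = add_mset G2 N"
    "aeq_item (Br V \<Gamma>) id [] G2" and rN: "rel_mset (\<lambda>I J. aeq_item I id [] J) {#Br V \<Delta>#} N"
    by blast
  from msed_rel_invL[OF rN] obtain N' D3 where c3: "N = add_mset D3 N'"
    "aeq_item (Br V \<Delta>) id [] D3" and rN': "rel_mset (\<lambda>I J. aeq_item I id [] J) {#} N'"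
    by blast
  have N': "N' = {#}" using rN' by simp
  from unpack_br[OF c2(2)] obtain W2 \<Gamma>2 f2 where g2: "G2 = Br W2 \<Gamma>2"
    "bij_betw f2 (fset V) (fset W2)"
    "rel_mset (\<lambda>I J. aeq_item I id [{(x, f2 x) | x. x \<in> fset V}] J) \<Gamma> \<Gamma>2" by blast
  from unpack_br[OF c3(2)] obtain W3 \<Delta>3 f3 where d3: "D3 = Br W3 \<Delta>3"
    "bij_betw f3 (fset V) (fset W3)"
    "rel_mset (\<lambda>I J. aeq_item I id [{(x, f3 x) | x. x \<in> fset V}] J) \<Delta> \<Delta>3" by blast
  have C1: "C1 = add_mset (Br W1 \<Delta>1) \<Gamma>1" using c1 d1 by simp
  have C2: "C2 = {#Br W2 \<Gamma>2, Br W3 \<Delta>3#}" using c2 c3 N' g2 d3 by simp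
  obtain s where s: "aeq_lj s (\<Sigma>1, E1) (\<Sigma>2, E2)"
    using forward[OF assms(1) d1(2) g2(2) d3(2) rG1 d1(3) g2(3) d3(3) u1(2) u2(2)]
      u1(3,4) u1(5,6) u2(5,6) unfolding C1 C2 by blast
  obtain s' where s': "aeq_lj s' (\<Sigma>2, E2) (\<Sigma>1, E1)"
    using backward[OF d1(2) g2(2) d3(2) rG1 d1(3) g2(3) d3(3) u1(2) u2(2)]
      u2(3,4) u1(5,6) u2(5,6) unfolding C1 C2 by blast
  show ?thesis unfolding abar_equiv_def using s s' by blast
qed

end
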